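(* Let $X$ be a mixed-stable sequence with respect to a full BST $T$. For every leaf $u$ of $T$ there are non-negative integers $a(u),b(u)$ such that the queries to $u$ occur exactly once every $2^{a(u)}3^{b(u)}$ consecutive queries of $X$. Consequently, the length of the atomic sequence of $X$ is $$2^{\max_u a(u)}\cdot 3^{\max_u b(u)},$$ the maxima being over leaves $u$. Moreover, if $X$ is strongly-stable then $b(u)=0$ for all leaves $u$, and if $X$ is weakly-stable then $a(u)=0$ for all leaves $u$.
   Context: Stable sequences. Let $T$ be a full binary search tree (every inner node has exactly two children), and let $X$ be a query sequence consisting only of keys stored at leaves of $T$. For an inner node $v$, let $X_v$ be the subsequence of $X$ consisting of the queries to keys in the subtree of $v$. - The node $v$ is strongly-stable if consecutive queries of $X_v$ alternate between the left and right subtrees of $v$. - The node $v$ is weakly-stable with a left bias if its left child $u$ is an inner node and $X_v$ repeats cyclically (from some starting phase) the pattern: a query in the left subtree of $u$, then one in the right subtree of $u$, then one in the right subtree of $v$. - Weakly-stable with a right bias is the mirror image: $u$ is the right child of $v$, and the pattern is right subtree of $u$, left subtree of $u$, left subtree of $v$. In both weakly-stable cases $u$ is called the favored child of $v$. $X$ (and $T$) is mixed-stable if every inner node of $T$ is strongly-stable or weakly-stable. It is strongly-stable if every inner node is strongly-stable, and weakly-stable if exactly half of the inner nodes are weakly-stable. Given $T$, the stability type of each inner node, and the subtree each node's pattern starts with, the stable sequence is determined up to its length. Its atomic sequence is the shortest such sequence all of whose repetitions are again such stable sequences. *)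

theory Defs
  imports Main "HOL-Library.Sublist"
begin

text \<open>Nodes are addressed by paths from the root (False = go left, True = go right).
  Keys are stored at leaves, so a key is identified with the path of its leaf.\<close>

datatype fbt = Leaf | Node fbt fbt

fun leaves :: "fbt \<Rightarrow> bool list set" where
  "leaves Leaf = {[]}"
| "leaves (Node l r) = Cons False ` leaves l \<union> Cons True ` leaves r"

fun inners :: "fbt \<Rightarrow> bool list set" where
  "inners Leaf = {}"
| "inners (Node l r) = {[]} \<union> Cons False ` inners l \<union> Cons True ` inners r"

definition query_seq :: "fbt \<Rightarrow> (nat \<Rightarrow> bool list) \<Rightarrow> bool" where
  "query_seq T X \<longleftrightarrow> (\<forall>i. X i \<in> leaves T)"

definition consec :: "(nat \<Rightarrow> bool list) \<Rightarrow> bool list \<Rightarrow> nat \<Rightarrow> nat \<Rightarrow> bool" where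
  "consec X v i j \<longleftrightarrow> i < j \<and> prefix v (X i) \<and> prefix v (X j) \<and>
     (\<forall>k. i < k \<and> k < j \<longrightarrow> \<not> prefix v (X k))"

definition strongly_stable_node :: "(nat \<Rightarrow> bool list) \<Rightarrow> bool list \<Rightarrow> bool" where
  "strongly_stable_node X v \<longleftrightarrow>
     (\<forall>i j. consec X v i j \<longrightarrow>
        (prefix (v @ [False]) (X i) \<longleftrightarrow> prefix (v @ [True]) (X j)))"

definition cyclic3 :: "(nat \<Rightarrow> bool list) \<Rightarrow> bool list \<Rightarrow> bool list \<Rightarrow> bool list \<Rightarrow> bool list \<Rightarrow> bool" where
  "cyclic3 X v p0 p1 p2 \<longleftrightarrow>
     (\<forall>i j. consec X v i j \<longrightarrow>
        (prefix (v @ p0) (X i) \<longrightarrow> prefix (v @ p1) (X j)) \<and>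
        (prefix (v @ p1) (X i) \<longrightarrow> prefix (v @ p2) (X j)) \<and>
        (prefix (v @ p2) (X i) \<longrightarrow> prefix (v @ p0) (X j)))"

definition weakly_stable_left :: "fbt \<Rightarrow> (nat \<Rightarrow> bool list) \<Rightarrow> bool list \<Rightarrow> bool" where
  "weakly_stable_left T X v \<longleftrightarrow>
     v @ [False] \<in> inners T \<and> cyclic3 X v [False, False] [False, True] [True]"

definition weakly_stable_right :: "fbt \<Rightarrow> (nat \<Rightarrow> bool list) \<Rightarrow> bool list \<Rightarrow> bool" where
  "weakly_stable_right T X v \<longleftrightarrow>
     v @ [True] \<in> inners T \<and> cyclic3 X v [True, True] [True, False] [False]"

definition weakly_stable_node :: "fbt \<Rightarrow> (nat \<Rightarrow> bool list) \<Rightarrow> bool list \<Rightarrow> bool" where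
  "weakly_stable_node T X v \<longleftrightarrow> weakly_stable_left T X v \<or> weakly_stable_right T X v"

definition mixed_stable :: "fbt \<Rightarrow> (nat \<Rightarrow> bool list) \<Rightarrow> bool" where
  "mixed_stable T X \<longleftrightarrow> query_seq T X \<and>
     (\<forall>v \<in> inners T. strongly_stable_node X v \<or> weakly_stable_node T X v)"

definition strongly_stable :: "fbt \<Rightarrow> (nat \<Rightarrow> bool list) \<Rightarrow> bool" where
  "strongly_stable T X \<longleftrightarrow> query_seq T X \<and> (\<forall>v \<in> inners T. strongly_stable_node X v)"

definition weakly_stable :: "fbt \<Rightarrow> (nat \<Rightarrow> bool list) \<Rightarrow> bool" where
  "weakly_stable T X \<longleftrightarrow> mixed_stable T X \<and>
     2 * card {v \<in> inners T. weakly_stable_node T X v} = card (inners T)"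

definition once_every :: "(nat \<Rightarrow> bool list) \<Rightarrow> bool list \<Rightarrow> nat \<Rightarrow> bool" where
  "once_every X u p \<longleftrightarrow> (\<forall>i. card {j. i \<le> j \<and> j < i + p \<and> X j = u} = 1)"

text \<open>Length of the atomic sequence: the shortest prefix w of X such that every
  repetition w^k is again the (same) stable sequence, i.e. a prefix of X;
  equivalently the least positive period of X.\<close>
definition atomic_length :: "(nat \<Rightarrow> bool list) \<Rightarrow> nat" where
  "atomic_length X = (LEAST n. 0 < n \<and> (\<forall>k i. i < k * n \<longrightarrow> X i = X (i mod n)))"

end

theory Submission
  imports Defs
begin


lemma leaves_nonnil_or: "u \<in> leaves (Node l r) \<Longrightarrow> u \<noteq> []"
  by auto

lemma inner_leaf_ext:
  "w \<in> inners T \<Longrightarrow> u \<in> leaves T \<Longrightarrow> prefix w u \<Longrightarrow> \<exists>x. prefix (w@[x]) u"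
proof (induction T arbitrary: w u)
  case Leaf then show ?case by simp
next
  case (Node l r)
  show ?case
  proof (cases w)
    case Nil
    then obtain x u' where "u = x # u'" using Node.prems(2) by auto
    then show ?thesis using Nil by auto
  next
    case (Cons y w')
    show ?thesis
    proof (cases y)
      case True
      with Node.prems Cons have w': "w' \<in> inners r" by auto
      from Node.prems Cons True obtain u' where u: "u = True # u'" "u' \<in> leaves r" "prefix w' u'"
        by auto
      from Node.IH(2)[OF w' u(2,3)] show ?thesis using u Cons True by auto
    next
      case False
      with Node.prems Cons have w': "w' \<in> inners l" by auto
      from Node.prems Cons False obtain u' where u: "u = False # u'" "u' \<in> leaves l" "prefix w' u'"
        by auto
      from Node.IH(1)[OF w' u(2,3)] show ?thesis using u Cons False by auto
    qed
  qed
qed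

lemma leaf_prefix_eq:
  "u \<in> leaves T \<Longrightarrow> u' \<in> leaves T \<Longrightarrow> prefix u u' \<Longrightarrow> u = u'"
proof (induction T arbitrary: u u')
  case Leaf then show ?case by simp
next
  case (Node l r)
  from Node.prems(1) obtain x v where u: "u = x # v" "(x \<and> v \<in> leaves r) \<or> (\<not>x \<and> v \<in> leaves l)" by auto
  from Node.prems(2) obtain y v' where u': "u' = y # v'" "(y \<and> v' \<in> leaves r) \<or> (\<not>y \<and> v' \<in> leaves l)" by auto
  from Node.prems(3) u u' have "x = y" "prefix v v'" by auto
  then show ?case using Node.IH u u' by (cases x) auto
qed

lemma inner_child:
  "v \<in> inners T \<Longrightarrow> v@[x] \<in> inners T \<union> leaves T"
proof (induction T arbitrary: v)
  case Leaf then show ?case by simp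
next
  case (Node l r)
  show ?case
  proof (cases v)
    case Nil
    then show ?thesis by (cases l; cases r; cases x) auto
  next
    case (Cons y v')
    show ?thesis
    proof (cases y)
      case True
      with Node.prems Cons have "v' \<in> inners r" by auto
      from Node.IH(2)[OF this] have "v'@[x] \<in> inners r \<union> leaves r" .
      then show ?thesis using Cons True by auto
    next
      case False
      with Node.prems Cons have "v' \<in> inners l" by auto
      from Node.IH(1)[OF this] have "v'@[x] \<in> inners l \<union> leaves l" .
      then show ?thesis using Cons False by auto
    qed
  qed
qed

lemma parent_inner:
  "v@[x] \<in> inners T \<union> leaves T \<Longrightarrow> v \<in> inners T"
proof (induction T arbitrary: v)
  case Leaf then show ?case by simp
next
  case (Node l r)
  show ?case
  proof (cases v)
    case Nil
    then show ?thesis by simp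
  next
    case (Cons y v')
    then show ?thesis using Node by (cases y) auto
  qed
qed

lemma root_node: "[] \<in> inners T \<union> leaves T"
  by (cases T) auto

lemma finite_leaves: "finite (leaves T)"
  by (induction T) auto

lemma finite_inners: "finite (inners T)"
  by (induction T) auto

lemma leaves_ne: "leaves T \<noteq> {}"
  by (induction T) auto

lemma inners_Leaf: "inners T = {} \<Longrightarrow> leaves T = {[]}"
  by (cases T) auto

lemma prefix_two: "prefix (w@[x]) u \<Longrightarrow> prefix (w@[y]) u \<Longrightarrow> x = y"
  by (auto simp: prefix_def)

lemma prefix_app_imp: "prefix (w@q) u \<Longrightarrow> prefix w u"
  by (auto simp: prefix_def)


lemma mod_lt2: "(x::nat) < 2*m \<Longrightarrow> x mod m = (if x < m then x else x - m)"
  by (simp add: mod_if le_mod_geq)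

lemma mod_shift:
  fixes c0 q m s :: nat
  assumes "c0 < m" "s < m"
  shows "((c0 + q) mod m = s) \<longleftrightarrow> (q mod m = (s + m - c0) mod m)"
proof -
  define t where "t = q mod m"
  have tm: "t < m" using assms t_def by simp
  have "(c0 + q) mod m = (c0 + t) mod m" by (simp add: t_def mod_add_right_eq)
  also have "\<dots> = (if c0 + t < m then c0 + t else c0 + t - m)" using tm assms by (intro mod_lt2) simp
  finally have e1: "(c0 + q) mod m = (if c0 + t < m then c0 + t else c0 + t - m)" .
  have e2: "(s + m - c0) mod m = (if s + m - c0 < m then s + m - c0 else s + m - c0 - m)"
    using assms by (intro mod_lt2) simp
  show ?thesis unfolding e1 e2 t_def[symmetric] using assms tm by auto
qed

lemma ap_eq:
  fixes p r x y s :: nat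
  assumes "y < p" "r < p"
  shows "(p * x + y = r + p * s) \<longleftrightarrow> (y = r \<and> x = s)"
proof
  assume h: "p * x + y = r + p * s"
  then have "(p * x + y) mod p = (r + p * s) mod p" by simp
  then have "y = r" using assms by simp
  with h assms show "y = r \<and> x = s" by simp
qed simp
lemma cyc_closed:
  assumes "\<forall>k. c (Suc k) = ((c k + 1) mod m :: nat)" "c 0 < m"
  shows "c k = (c 0 + k) mod m"
proof (induction k)
  case 0 then show ?case using assms by simp
next
  case (Suc k)
  then show ?case using assms(1) by (simp add: mod_Suc_eq)
qed

lemma cyc_ap:
  fixes p r m c0 s :: nat
  assumes "0 < p" "r < p" "0 < m" "c0 < m" "s < m"
  shows "\<exists>r' < m*p. \<forall>j. (j mod p = r \<and> (c0 + j div p) mod m = s) \<longleftrightarrow> j mod (m*p) = r'"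
proof -
  define t where "t = (s + m - c0) mod m"
  have tm: "t < m" using assms t_def by simp
  have "p * Suc t \<le> p * m" using tm by (intro mult_le_mono2) simp
  then have lt: "r + p * t < m * p" using assms by (simp add: mult.commute)
  have "\<forall>j. (j mod p = r \<and> (c0 + j div p) mod m = s) \<longleftrightarrow> j mod (m*p) = r + p * t"
  proof
    fix j
    have "j mod (m*p) = p * (j div p mod m) + j mod p"
      using mod_mult2_eq[of j p m] by (simp add: mult.commute)
    moreover have "(p * (j div p mod m) + j mod p = r + p * t) \<longleftrightarrow> (j mod p = r \<and> j div p mod m = t)"
      using assms by (intro ap_eq) auto
    moreover have "((c0 + j div p) mod m = s) \<longleftrightarrow> (j div p mod m = t)"
      unfolding t_def using assms by (intro mod_shift)
    ultimately show "(j mod p = r \<and> (c0 + j div p) mod m = s) \<longleftrightarrow> j mod (m*p) = r + p * t"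
      by auto
  qed
  then show ?thesis using lt by blast
qed

lemma between_ap:
  fixes p r k t n :: nat
  assumes "0 < p" "r < p" "r + p*k < t" "t < r + p*(k+n)" "t mod p = r"
  shows "\<exists>l. 0 < l \<and> l < n \<and> t = r + p*(k+l)"
proof -
  have t: "t = r + p * (t div p)" using assms(5) by (metis add.commute div_mult_mod_eq mult.commute)
  have "p*k < p * (t div p)" using assms(3) t by linarith
  then have a: "k < t div p" using assms(1) by simp
  have "p * (t div p) < p*(k+n)" using assms(4) t by linarith
  then have b: "t div p < k + n" using assms(1) by simp
  show ?thesis using a b t by (intro exI[of _ "t div p - k"]) auto
qed


definition AP :: "(nat \<Rightarrow> bool list) \<Rightarrow> bool list \<Rightarrow> nat \<Rightarrow> nat \<Rightarrow> bool" where
  "AP X w r p \<longleftrightarrow> 0 < p \<and> r < p \<and> (\<forall>j. prefix w (X j) \<longleftrightarrow> j mod p = r)"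

definition inf_q :: "(nat \<Rightarrow> bool list) \<Rightarrow> bool list \<Rightarrow> bool" where
  "inf_q X w \<longleftrightarrow> (\<forall>i. \<exists>j>i. prefix w (X j))"

definition wk :: "fbt \<Rightarrow> (nat \<Rightarrow> bool list) \<Rightarrow> bool list \<Rightarrow> bool \<Rightarrow> bool" where
  "wk T X v d \<longleftrightarrow> v @ [d] \<in> inners T \<and> cyclic3 X v [d, d] [d, \<not>d] [\<not>d]"

lemma weak_node_iff: "weakly_stable_node T X v \<longleftrightarrow> wk T X v False \<or> wk T X v True"
  unfolding weakly_stable_node_def weakly_stable_left_def weakly_stable_right_def wk_def by simp

lemma AP_mem: "AP X v r p \<Longrightarrow> prefix v (X (r + p*k))"
  unfolding AP_def by simp

lemma AP_pos: "AP X v r p \<Longrightarrow> prefix v (X j) \<Longrightarrow> j = r + p*(j div p)"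
proof -
  assume a: "AP X v r p" "prefix v (X j)"
  then have "j mod p = r" unfolding AP_def by blast
  moreover have "j = p*(j div p) + j mod p" by simp
  ultimately show ?thesis by linarith
qed

lemma AP_consec: "AP X v r p \<Longrightarrow> consec X v (r + p*k) (r + p*Suc k)"
  unfolding consec_def
proof (intro conjI allI impI)
  assume ap: "AP X v r p"
  then show "r + p * k < r + p * Suc k" unfolding AP_def by simp
  show "prefix v (X (r + p * k))" by (rule AP_mem[OF ap])
  show "prefix v (X (r + p * Suc k))" by (rule AP_mem[OF ap])
  fix t assume t: "r + p * k < t \<and> t < r + p * Suc k"
  show "\<not> prefix v (X t)"
  proof
    assume "prefix v (X t)"
    then have "t mod p = r" using ap unfolding AP_def by simp
    then show False using between_ap[of p r k t 1] ap t unfolding AP_def by auto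
  qed
qed

lemma consec_unique: "consec X w i j \<Longrightarrow> consec X w i j' \<Longrightarrow> j = j'"
proof -
  assume a: "consec X w i j" "consec X w i j'"
  show "j = j'"
  proof (rule ccontr)
    assume "j \<noteq> j'"
    then consider "j < j'" | "j' < j" by linarith
    then show False
    proof cases
      case 1
      have "prefix w (X j)" "\<forall>k. i < k \<and> k < j' \<longrightarrow> \<not> prefix w (X k)" "i < j"
        using a unfolding consec_def by blast+
      then show False using 1 by blast
    next
      case 2
      have "prefix w (X j')" "\<forall>k. i < k \<and> k < j \<longrightarrow> \<not> prefix w (X k)" "i < j'"
        using a unfolding consec_def by blast+
      then show False using 2 by blast
    qed
  qed
qed

lemma next_ex:
  assumes "inf_q X w" "prefix w (X i)"
  shows "\<exists>j. consec X w i j"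
proof -
  define j where "j = (LEAST j. i < j \<and> prefix w (X j))"
  from assms(1) obtain j0 where "i < j0 \<and> prefix w (X j0)" unfolding inf_q_def by blast
  then have j: "i < j \<and> prefix w (X j)" unfolding j_def by (rule LeastI)
  have "\<forall>k. i < k \<and> k < j \<longrightarrow> \<not> prefix w (X k)"
    using not_less_Least j_def by blast
  then have "consec X w i j" using j assms(2) unfolding consec_def by blast
  then show ?thesis ..
qed

lemma AP_inf: "AP X v r p \<Longrightarrow> inf_q X v"
  unfolding inf_q_def
proof
  fix i assume ap: "AP X v r p"
  have "0 < p" using ap unfolding AP_def by simp
  then have h: "1 * Suc i \<le> p * Suc i" by (intro mult_le_mono1) simp
  have "i < r + p * Suc i" using h le_add2[of "p*Suc i" r] by simp
  then show "\<exists>j>i. prefix v (X j)" using AP_mem[OF ap] by blast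
qed

lemma side_iff: "prefix (w@[a]) u \<Longrightarrow> prefix (w@[b]) u \<longleftrightarrow> a = b"
  using prefix_two[of w a u b] by auto

lemma AP_step:
  assumes ap: "AP X v r p" and m: "0 < m" and cs: "\<forall>k. c (Suc k) = (c k + 1) mod m"
    and c0: "c 0 < m" and s: "s < m"
    and cls: "\<forall>k. prefix (v@q) (X (r + p*k)) \<longleftrightarrow> c k = s"
  shows "\<exists>r'. AP X (v@q) r' (m*p)"
proof -
  have cc: "c k = (c 0 + k) mod m" for k using cyc_closed[OF cs c0] .
  have p: "0 < p" "r < p" using ap unfolding AP_def by auto
  have iff: "prefix (v@q) (X j) \<longleftrightarrow> (j mod p = r \<and> (c 0 + j div p) mod m = s)" for j
  proof
    assume h: "prefix (v@q) (X j)"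
    then have pv: "prefix v (X j)" by (rule prefix_app_imp)
    then have jm: "j mod p = r" using ap unfolding AP_def by simp
    define k where "k = j div p"
    have jk: "j = r + p*k" unfolding k_def by (rule AP_pos[OF ap pv])
    have "c k = s" using cls h jk by simp
    then have "c (j div p) = s" using k_def by simp
    then show "j mod p = r \<and> (c 0 + j div p) mod m = s" using jm cc[of "j div p"] by simp
  next
    assume h: "j mod p = r \<and> (c 0 + j div p) mod m = s"
    then have "prefix v (X j)" using ap unfolding AP_def by simp
    define k where "k = j div p"
    have jk: "j = r + p*k" unfolding k_def by (rule AP_pos[OF ap \<open>prefix v (X j)\<close>])
    have "c k = s" using h cc[of k] k_def by simp
    then show "prefix (v@q) (X j)" using cls jk by simp
  qed
  obtain r' where r': "r' < m*p" "\<forall>j. (j mod p = r \<and> (c 0 + j div p) mod m = s) \<longleftrightarrow> j mod (m*p) = r'"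
    using cyc_ap[OF p(1) p(2) m c0 s] by blast
  have all: "\<forall>j. prefix (v@q) (X j) \<longleftrightarrow> j mod (m*p) = r'" using iff r'(2) by blast
  have "0 < m*p" using m p by simp
  then have "AP X (v@q) r' (m*p)" unfolding AP_def using all r'(1) by blast
  then show ?thesis ..
qed



lemma pfx_ne: "prefix (w@[a]) u \<Longrightarrow> \<not> prefix (w@[\<not>a]) u"
  using side_iff by fastforce

lemma pfx2_ne: "prefix (w@[a,b]) u \<Longrightarrow> \<not> prefix (w@[a,\<not>b]) u"
  using pfx_ne[of "w@[a]" b u] by simp

lemma pfx2_1: "prefix (w@[a,b]) u \<Longrightarrow> prefix (w@[a]) u"
  using prefix_app_imp[of "w@[a]" "[b]" u] by simp

lemma pfx_either:
  assumes "w \<in> inners T" "u \<in> leaves T" "prefix w u"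
  shows "prefix (w@[a]) u \<or> prefix (w@[\<not>a]) u"
proof -
  obtain x where "prefix (w@[x]) u" using inner_leaf_ext[OF assms] by blast
  then show ?thesis by (cases "x = a") auto
qed

definition cls3 :: "bool list \<Rightarrow> bool \<Rightarrow> bool list \<Rightarrow> nat" where
  "cls3 v d u = (if prefix (v@[d,d]) u then 0 else if prefix (v@[d,\<not>d]) u then 1 else 2)"

lemma cls3_props:
  assumes u: "u \<in> leaves T" and pv: "prefix v u" and v: "v \<in> inners T" and vd: "v@[d] \<in> inners T"
  shows "(prefix (v@[d,d]) u \<longleftrightarrow> cls3 v d u = 0) \<and> (prefix (v@[d,\<not>d]) u \<longleftrightarrow> cls3 v d u = 1)
       \<and> (prefix (v@[\<not>d]) u \<longleftrightarrow> cls3 v d u = 2) \<and> cls3 v d u < 3"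
proof (cases "prefix (v@[d]) u")
  case True
  have n: "\<not> prefix (v@[\<not>d]) u" using pfx_ne[OF True] .
  from pfx_either[OF vd u True, of d] have "prefix (v@[d,d]) u \<or> prefix (v@[d,\<not>d]) u" by simp
  then show ?thesis
  proof
    assume h: "prefix (v@[d,d]) u"
    then show ?thesis using n pfx2_ne[OF h] unfolding cls3_def by simp
  next
    assume h: "prefix (v@[d,\<not>d]) u"
    have "\<not> prefix (v@[d,d]) u" using pfx2_ne[OF h] by simp
    then show ?thesis using n h unfolding cls3_def by simp
  qed
next
  case False
  then have h: "prefix (v@[\<not>d]) u" using pfx_either[OF v u pv, of d] by simp
  have "\<not> prefix (v@[d,d]) u" using False pfx2_1[of v d d u] by blast
  moreover have "\<not> prefix (v@[d,\<not>d]) u" using False pfx2_1[of v d "\<not>d" u] by blast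
  ultimately have "\<not> prefix (v@[d,d]) u \<and> \<not> prefix (v@[d,\<not>d]) u" by blast
  then
  show ?thesis using h unfolding cls3_def by simp
qed

lemma consec_leaves:
  assumes "query_seq T X" "consec X v i j"
  shows "X i \<in> leaves T" "X j \<in> leaves T" "prefix v (X i)" "prefix v (X j)"
  using assms unfolding query_seq_def consec_def by auto

lemma weak_trans:
  assumes q: "query_seq T X" and v: "v \<in> inners T" and w: "wk T X v d" and c: "consec X v i j"
  shows "cls3 v d (X j) = (cls3 v d (X i) + 1) mod 3"
proof -
  note L = consec_leaves[OF q c]
  have vd: "v@[d] \<in> inners T" using w unfolding wk_def by simp
  have cy: "(prefix (v @ [d,d]) (X i) \<longrightarrow> prefix (v @ [d,\<not>d]) (X j)) \<and>
        (prefix (v @ [d,\<not>d]) (X i) \<longrightarrow> prefix (v @ [\<not>d]) (X j)) \<and>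
        (prefix (v @ [\<not>d]) (X i) \<longrightarrow> prefix (v @ [d,d]) (X j))"
    using w c unfolding wk_def cyclic3_def by blast
  note Pi = cls3_props[OF L(1) L(3) v vd] and Pj = cls3_props[OF L(2) L(4) v vd]
  have "cls3 v d (X i) = 0 \<or> cls3 v d (X i) = 1 \<or> cls3 v d (X i) = 2" using Pi by linarith
  then show ?thesis
  proof (elim disjE)
    assume "cls3 v d (X i) = 0" then show ?thesis using Pi Pj cy by simp
  next
    assume "cls3 v d (X i) = 1" then show ?thesis using Pi Pj cy by simp
  next
    assume "cls3 v d (X i) = 2" then show ?thesis using Pi Pj cy by simp
  qed
qed

lemma weak_cyc:
  assumes q: "query_seq T X" and v: "v \<in> inners T" and w: "wk T X v d" and ap: "AP X v r p"
  defines "c \<equiv> \<lambda>k. cls3 v d (X (r + p*k))"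
  shows "\<forall>k. c (Suc k) = (c k + 1) mod 3" "\<forall>k. c k < 3"
    "\<forall>k. prefix (v@[d,d]) (X (r + p*k)) \<longleftrightarrow> c k = 0"
    "\<forall>k. prefix (v@[d,\<not>d]) (X (r + p*k)) \<longleftrightarrow> c k = 1"
    "\<forall>k. prefix (v@[\<not>d]) (X (r + p*k)) \<longleftrightarrow> c k = 2"
proof -
  have vd: "v@[d] \<in> inners T" using w unfolding wk_def by simp
  have L: "X (r + p*k) \<in> leaves T" for k using q unfolding query_seq_def by simp
  note P = cls3_props[OF L AP_mem[OF ap] v vd]
  show "\<forall>k. c (Suc k) = (c k + 1) mod 3" unfolding c_def using weak_trans[OF q v w AP_consec[OF ap]] by blast
  show "\<forall>k. c k < 3" unfolding c_def using P by blast
  show "\<forall>k. prefix (v@[d,d]) (X (r + p*k)) \<longleftrightarrow> c k = 0" unfolding c_def using P by blast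
  show "\<forall>k. prefix (v@[d,\<not>d]) (X (r + p*k)) \<longleftrightarrow> c k = 1" unfolding c_def using P by blast
  show "\<forall>k. prefix (v@[\<not>d]) (X (r + p*k)) \<longleftrightarrow> c k = 2" unfolding c_def using P by blast
qed

lemma weak_step:
  assumes q: "query_seq T X" and v: "v \<in> inners T" and w: "wk T X v d" and ap: "AP X v r p"
    and qq: "qq = [d,d] \<or> qq = [d,\<not>d] \<or> qq = [\<not>d]"
  shows "\<exists>r'. AP X (v@qq) r' (3*p)"
proof -
  define c where "c = (\<lambda>k. cls3 v d (X (r + p*k)))"
  note W0 = weak_cyc[OF q v w ap]
  have W1: "\<forall>k. c (Suc k) = (c k + 1) mod 3" unfolding c_def using W0(1) by blast
  have c0: "c 0 < 3" unfolding c_def using W0(2) by blast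
  have W3: "\<forall>k. prefix (v@[d,d]) (X (r + p*k)) \<longleftrightarrow> c k = 0" unfolding c_def using W0(3) by blast
  have W4: "\<forall>k. prefix (v@[d,\<not>d]) (X (r + p*k)) \<longleftrightarrow> c k = 1" unfolding c_def using W0(4) by blast
  have W5: "\<forall>k. prefix (v@[\<not>d]) (X (r + p*k)) \<longleftrightarrow> c k = 2" unfolding c_def using W0(5) by blast
  from qq show ?thesis
  proof (elim disjE)
    assume "qq = [d,d]" then show ?thesis using AP_step[OF ap _ W1 c0, of 0 qq] W3 by simp
  next
    assume "qq = [d,\<not>d]" then show ?thesis using AP_step[OF ap _ W1 c0, of 1 qq] W4 by simp
  next
    assume "qq = [\<not>d]" then show ?thesis using AP_step[OF ap _ W1 c0, of 2 qq] W5 by simp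
  qed
qed

definition cls2 :: "bool list \<Rightarrow> bool list \<Rightarrow> nat" where
  "cls2 v u = (if prefix (v@[False]) u then 0 else 1)"

lemma strong_trans:
  assumes q: "query_seq T X" and v: "v \<in> inners T" and s: "strongly_stable_node X v" and c: "consec X v i j"
  shows "cls2 v (X j) = (cls2 v (X i) + 1) mod 2"
proof -
  note L = consec_leaves[OF q c]
  have st: "prefix (v @ [False]) (X i) \<longleftrightarrow> prefix (v @ [True]) (X j)"
    using s c unfolding strongly_stable_node_def by blast
  have ej: "prefix (v@[False]) (X j) \<or> prefix (v@[True]) (X j)" using pfx_either[OF v L(2) L(4), of False] by simp
  show ?thesis
  proof (cases "prefix (v @ [False]) (X i)")
    case True
    then have "prefix (v @ [True]) (X j)" using st by simp
    then have "\<not> prefix (v @ [False]) (X j)" using pfx_ne[of v True] by simp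
    then show ?thesis using True unfolding cls2_def by simp
  next
    case False
    then have "prefix (v @ [False]) (X j)" using st ej by simp
    then show ?thesis using False unfolding cls2_def by simp
  qed
qed

lemma strong_step:
  assumes q: "query_seq T X" and v: "v \<in> inners T" and s: "strongly_stable_node X v" and ap: "AP X v r p"
  shows "\<exists>r'. AP X (v@[x]) r' (2*p)"
proof -
  define c where "c = (\<lambda>k. cls2 v (X (r + p*k)))"
  have cs: "\<forall>k. c (Suc k) = (c k + 1) mod 2" unfolding c_def using strong_trans[OF q v s AP_consec[OF ap]] by blast
  have c0: "c 0 < 2" unfolding c_def cls2_def by simp
  have L: "X (r + p*k) \<in> leaves T" for k using q unfolding query_seq_def by simp
  have E: "prefix (v@[False]) (X (r + p*k)) \<or> prefix (v@[True]) (X (r + p*k))" for k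
    using pfx_either[OF v L AP_mem[OF ap], of False] by simp
  have N: "\<not> (prefix (v@[False]) (X (r + p*k)) \<and> prefix (v@[True]) (X (r + p*k)))" for k
    using pfx_ne[of v False] by simp
  have cls: "\<forall>k. prefix (v@[x]) (X (r + p*k)) \<longleftrightarrow> c k = (if x then 1 else 0)"
  proof
    fix k show "prefix (v@[x]) (X (r + p*k)) \<longleftrightarrow> c k = (if x then 1 else 0)"
      using E[of k] N[of k] unfolding c_def cls2_def by (cases x) auto
  qed
  show ?thesis using AP_step[OF ap _ cs c0, of "if x then 1 else 0" "[x]"] cls by simp
qed



lemma sides_alt:
  assumes "prefix (w@[a]) u1" "prefix (w@[\<not>a]) u2"
  shows "prefix (w@[False]) u1 \<longleftrightarrow> prefix (w@[True]) u2"
proof (cases a)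
  case True
  then show ?thesis using assms pfx_ne[of w True u1] pfx_ne[of w False u2] by simp
next
  case False
  then show ?thesis using assms pfx_ne[of w False u1] pfx_ne[of w True u2] by simp
qed

lemma bad_pair:
  assumes q: "query_seq T X" and w: "w \<in> inners T" and s: "strongly_stable_node X w"
    and k: "wk T X w e" and c: "consec X w i j" and c0: "cls3 w e (X i) = 0"
  shows False
proof -
  note L = consec_leaves[OF q c]
  have we: "w@[e] \<in> inners T" using k unfolding wk_def by simp
  have cj: "cls3 w e (X j) = 1" using weak_trans[OF q w k c] c0 by simp
  have "prefix (w@[e,e]) (X i)" using cls3_props[OF L(1) L(3) w we] c0 by blast
  then have pi: "prefix (w@[e]) (X i)" by (rule pfx2_1)
  have "prefix (w@[e,\<not>e]) (X j)" using cls3_props[OF L(2) L(4) w we] cj by blast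
  then have pj: "prefix (w@[e]) (X j)" by (rule pfx2_1)
  have "cls2 w (X j) = (cls2 w (X i) + 1) mod 2" using strong_trans[OF q w s c] .
  moreover have "cls2 w (X j) = cls2 w (X i)"
    unfolding cls2_def using pi pj side_iff[OF pi, of False] side_iff[OF pj, of False] by simp
  ultimately show False unfolding cls2_def by (simp split: if_splits)
qed

lemma weak_not_strong:
  assumes q: "query_seq T X" and w: "w \<in> inners T" and inf: "inf_q X w"
    and s: "strongly_stable_node X w" and k: "wk T X w e"
  shows False
proof -
  obtain i0 where "0 < i0" "prefix w (X i0)" using inf unfolding inf_q_def by blast
  then obtain i1 where c1: "consec X w i0 i1" using next_ex[OF inf] by blast
  then obtain i2 where c2: "consec X w i1 i2" using next_ex[OF inf] unfolding consec_def by blast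
  then obtain i3 where c3: "consec X w i2 i3" using next_ex[OF inf] unfolding consec_def by blast
  have t1: "cls3 w e (X i1) = (cls3 w e (X i0) + 1) mod 3" using weak_trans[OF q w k c1] .
  have t2: "cls3 w e (X i2) = (cls3 w e (X i1) + 1) mod 3" using weak_trans[OF q w k c2] .
  have we: "w@[e] \<in> inners T" using k unfolding wk_def by simp
  note L = consec_leaves[OF q c1]
  have "cls3 w e (X i0) < 3" using cls3_props[OF L(1) L(3) w we] by blast
  then have "cls3 w e (X i0) = 0 \<or> cls3 w e (X i0) = 1 \<or> cls3 w e (X i0) = 2" by linarith
  then have "cls3 w e (X i0) = 0 \<or> cls3 w e (X i1) = 0 \<or> cls3 w e (X i2) = 0" using t1 t2 by auto
  then show False using bad_pair[OF q w s k c1] bad_pair[OF q w s k c2] bad_pair[OF q w s k c3] by blast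
qed

lemma fav_strong:
  assumes q: "query_seq T X" and v: "v \<in> inners T" and w: "wk T X v d" and ap: "AP X v r p"
  shows "strongly_stable_node X (v@[d]) \<and> inf_q X (v@[d])"
proof -
  define c where "c = (\<lambda>k. cls3 v d (X (r + p*k)))"
  note W0 = weak_cyc[OF q v w ap]
  have W1: "\<forall>k. c (Suc k) = (c k + 1) mod 3" unfolding c_def using W0(1) by blast
  have c0: "c 0 < 3" unfolding c_def using W0(2) by blast
  have W3: "\<forall>k. prefix (v@[d,d]) (X (r + p*k)) \<longleftrightarrow> c k = 0" unfolding c_def using W0(3) by blast
  have W4: "\<forall>k. prefix (v@[d,\<not>d]) (X (r + p*k)) \<longleftrightarrow> c k = 1" unfolding c_def using W0(4) by blast
  have W5: "\<forall>k. prefix (v@[\<not>d]) (X (r + p*k)) \<longleftrightarrow> c k = 2" unfolding c_def using W0(5) by blast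
  have cc: "c k = (c 0 + k) mod 3" for k using cyc_closed[OF W1 c0] .
  have p: "0 < p" "r < p" using ap unfolding AP_def by auto
  have inf: "inf_q X (v@[d])" unfolding inf_q_def
  proof
    fix i
    define k where "k = 3*i + 3 - c 0"
    have "c k = (c 0 + k) mod 3" by (rule cc)
    also have "c 0 + k = 3 * (i + 1)" unfolding k_def using c0 by simp
    finally have ck: "c k = 0" by simp
    have "1 * k \<le> p * k" using p by (intro mult_le_mono1) simp
    then have "k \<le> p * k" by (simp only: mult_1)
    then have kk: "k \<le> r + p * k" by (rule trans_le_add2)
    moreover have "i < k" unfolding k_def using c0 by simp
    ultimately have "i < r + p*k" by (rule less_le_trans[rotated])
    moreover have "prefix (v@[d,d]) (X (r + p*k))" using W3 ck by blast
    then have "prefix (v@[d]) (X (r + p*k))" by (rule pfx2_1)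
    ultimately show "\<exists>j>i. prefix (v@[d]) (X j)" by blast
  qed
  have ss: "strongly_stable_node X (v@[d])" unfolding strongly_stable_node_def
  proof (intro allI impI)
    fix i j assume cij: "consec X (v@[d]) i j"
    have pi: "prefix (v@[d]) (X i)" using cij unfolding consec_def by simp
    then have "prefix v (X i)" using prefix_app_imp by blast
    define k where "k = i div p"
    have ik: "i = r + p*k" unfolding k_def by (rule AP_pos[OF ap \<open>prefix v (X i)\<close>])
    have "c k \<noteq> 2"
    proof
      assume "c k = 2"
      then have "prefix (v@[\<not>d]) (X (r + p*k))" using W5 by blast
      then have "prefix (v@[\<not>d]) (X i)" using ik by simp
      then show False using pi pfx_ne[of v d "X i"] by blast
    qed
    moreover have "c k < 3" using cc[of k] by simp
    ultimately consider "c k = 0" | "c k = 1" by linarith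
    then show "prefix ((v @ [d]) @ [False]) (X i) \<longleftrightarrow> prefix ((v @ [d]) @ [True]) (X j)"
    proof cases
      case 1
      have c1: "c (Suc k) = 1" using W1 1 by simp
      have "consec X (v@[d]) i (r + p*Suc k)" unfolding consec_def
      proof (intro conjI allI impI)
        show "i < r + p * Suc k" using ik p by simp
        show "prefix (v @ [d]) (X i)" by fact
        have "prefix (v@[d,\<not>d]) (X (r + p * Suc k))" using W4 c1 by blast
        then show "prefix (v @ [d]) (X (r + p * Suc k))" by (rule pfx2_1)
        fix t assume t: "i < t \<and> t < r + p * Suc k"
        show "\<not> prefix (v @ [d]) (X t)"
        proof
          assume "prefix (v @ [d]) (X t)"
          then have "prefix v (X t)" using prefix_app_imp by blast
          then have "t mod p = r" using ap unfolding AP_def by simp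
          then show False using between_ap[of p r k t 1] p t ik by auto
        qed
      qed
      then have j: "j = r + p*Suc k" using consec_unique[OF cij] by blast
      have a: "prefix ((v@[d])@[d]) (X i)" using W3 1 ik by simp
      have "prefix (v@[d,\<not>d]) (X (r + p*Suc k))" using W4 c1 by blast
      then have b: "prefix ((v@[d])@[\<not>d]) (X j)" using j by simp
      show ?thesis using sides_alt[OF a b] .
    next
      case 2
      have c1: "c (Suc k) = 2" using W1 2 by simp
      have c2: "c (Suc (Suc k)) = 0" using W1 c1 by simp
      have "consec X (v@[d]) i (r + p*Suc (Suc k))" unfolding consec_def
      proof (intro conjI allI impI)
        show "i < r + p * Suc (Suc k)" using ik p by simp
        show "prefix (v @ [d]) (X i)" by fact
        have "prefix (v@[d,d]) (X (r + p * Suc (Suc k)))" using W3 c2 by blast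
        then show "prefix (v @ [d]) (X (r + p * Suc (Suc k)))" by (rule pfx2_1)
        fix t assume t0: "i < t \<and> t < r + p * Suc (Suc k)"
        have t: "r + p*k < t" "t < r + p*(k+2)" using t0 ik by simp_all
        show "\<not> prefix (v @ [d]) (X t)"
        proof
          assume pt: "prefix (v @ [d]) (X t)"
          then have "prefix v (X t)" using prefix_app_imp by blast
          then have "t mod p = r" using ap unfolding AP_def by simp
          then obtain l where l: "0 < l" "l < 2" "t = r + p*(k+l)" using between_ap[of p r k t 2] p t by blast
          then have "l = 1" by simp
          then have "t = r + p*Suc k" using l(3) by simp
          moreover have "prefix (v@[\<not>d]) (X (r + p*Suc k))" using W5 c1 by blast
          ultimately have "prefix (v@[\<not>d]) (X t)" by simp
          then show False using pt pfx_ne[of v "\<not>d"] by simp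
        qed
      qed
      then have j: "j = r + p*Suc (Suc k)" using consec_unique[OF cij] by blast
      have a: "prefix ((v@[d])@[\<not>d]) (X i)" using W4 2 ik by simp
      have "prefix (v@[d,d]) (X (r + p*Suc (Suc k)))" using W3 c2 by blast
      then have b: "prefix ((v@[d])@[\<not>\<not>d]) (X j)" using j by simp
      show ?thesis using sides_alt[OF a b] .
    qed
  qed
  show ?thesis using ss inf by blast
qed


lemma win_uniq0:
  fixes i j1 j2 P :: nat
  assumes "i \<le> j1" "j1 \<le> j2" "j2 < i + P" "j1 mod P = j2 mod P"
  shows "j1 = j2"
proof (rule ccontr)
  assume "j1 \<noteq> j2"
  then have "0 < j2 - j1" using assms by simp
  moreover have "P dvd j2 - j1" using assms mod_eq_dvd_iff_nat[of j1 j2 P] by simp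
  moreover have "j2 - j1 < P" using assms by simp
  ultimately show False using nat_dvd_not_less by blast
qed

lemma win_uniq:
  fixes i j1 j2 P :: nat
  assumes "i \<le> j1" "j1 < i + P" "i \<le> j2" "j2 < i + P" "j1 mod P = j2 mod P"
  shows "j1 = j2"
  using win_uniq0[of i j1 j2 P] win_uniq0[of i j2 j1 P] assms by linarith

lemma add_mod_dvd:
  fixes r n P :: nat
  assumes "r < P" "(r + n) mod P = r"
  shows "P dvd n"
  by (metis assms(2) mod_eq_dvd_iff_nat diff_add_inverse le_add1 mod_add_left_eq)

lemma win_ex:
  fixes i r P :: nat
  assumes "0 < P" "r < P"
  shows "(i + (r + P - i mod P) mod P) mod P = r"
  by (smt (verit, best) Nat.add_diff_assoc add.commute add.left_commute
    assms(1,2) le_add_diff_inverse2 mod_add_right_eq mod_add_self1 mod_if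
    mod_le_divisor)

lemma win_card:
  fixes i r P :: nat
  assumes "0 < P" "r < P"
  shows "card {j. i \<le> j \<and> j < i + P \<and> j mod P = r} = 1"
proof -
  define e where "e = i + (r + P - i mod P) mod P"
  have "(r + P - i mod P) mod P < P" using assms by simp
  then have e: "i \<le> e" "e < i + P" "e mod P = r" unfolding e_def using win_ex[OF assms] by auto
  have "{j. i \<le> j \<and> j < i + P \<and> j mod P = r} = {e}"
  proof (rule set_eqI, rule iffI)
    fix j assume "j \<in> {j. i \<le> j \<and> j < i + P \<and> j mod P = r}"
    then have "i \<le> j" "j < i + P" "j mod P = e mod P" using e by auto
    then have "j = e" using win_uniq[of i j P e] e by blast
    then show "j \<in> {e}" by simp
  next
    fix j assume "j \<in> {e}"
    then show "j \<in> {j. i \<le> j \<and> j < i + P \<and> j mod P = r}" using e by simp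
  qed
  then show ?thesis by simp
qed


definition Gd :: "(nat \<Rightarrow> bool list) \<Rightarrow> bool list \<Rightarrow> nat \<Rightarrow> nat \<Rightarrow> bool" where
  "Gd X w a b \<longleftrightarrow> (\<exists>r. AP X w r (2^a * 3^b))"

definition okm :: "bool \<Rightarrow> bool \<Rightarrow> nat \<Rightarrow> nat \<Rightarrow> bool" where
  "okm ss ws a b \<longleftrightarrow> (ss \<longrightarrow> b = 0) \<and> (ws \<longrightarrow> a = 0)"

lemma wk_inner: "wk T X g y \<Longrightarrow> g \<in> inners T"
  unfolding wk_def using parent_inner by blast

lemma weak_Gd:
  assumes q: "query_seq T X" and g: "g \<in> inners T" and w: "wk T X g y" and G: "Gd X g a b"
    and qq: "qq = [y,y] \<or> qq = [y,\<not>y] \<or> qq = [\<not>y]"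
  shows "Gd X (g@qq) a (Suc b)"
proof -
  obtain r where "AP X g r (2^a*3^b)" using G unfolding Gd_def by blast
  from weak_step[OF q g w this qq] obtain r' where r': "AP X (g@qq) r' (3*(2^a*3^b))" by blast
  have "(3::nat)*(2^a*3^b) = 2^a * 3^Suc b" by simp
  then have "AP X (g@qq) r' (2^a * 3^Suc b)" using r' by metis
  then show ?thesis unfolding Gd_def by blast
qed

lemma strong_Gd:
  assumes q: "query_seq T X" and v: "v \<in> inners T" and s: "strongly_stable_node X v" and G: "Gd X v a b"
  shows "Gd X (v@[x]) (Suc a) b"
proof -
  obtain r where "AP X v r (2^a*3^b)" using G unfolding Gd_def by blast
  from strong_step[OF q v s this] obtain r' where r': "AP X (v@[x]) r' (2*(2^a*3^b))" by blast
  have "(2::nat)*(2^a*3^b) = 2^Suc a * 3^b" by simp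
  then have "AP X (v@[x]) r' (2^Suc a * 3^b)" using r' by metis
  then show ?thesis unfolding Gd_def by blast
qed

lemma Gd_inf: "Gd X w a b \<Longrightarrow> inf_q X w"
  unfolding Gd_def using AP_inf by blast

lemma main_claim:
  assumes ms: "mixed_stable T X"
    and SS: "ss \<longrightarrow> (\<forall>v\<in>inners T. strongly_stable_node X v)"
    and WS1: "ws \<longrightarrow> (\<forall>v\<in>inners T. \<not> weakly_stable_node T X v \<longrightarrow> (\<exists>g y. v = g@[y] \<and> wk T X g y))"
    and WS2: "ws \<longrightarrow> (\<forall>h z. h \<in> inners T \<longrightarrow> wk T X h z \<longrightarrow> \<not> weakly_stable_node T X (h@[z]))"
    and nb: "\<not> (ss \<and> ws)"
  shows "w \<in> inners T \<union> leaves T \<Longrightarrow> (\<exists>a b. Gd X w a b \<and> okm ss ws a b) \<or>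
           (\<exists>v x a b. w = v@[x] \<and> wk T X v x \<and> Gd X v a b \<and> okm ss ws a b)"
proof (induction "length w" arbitrary: w rule: less_induct)
  case less
  have q: "query_seq T X" using ms unfolding mixed_stable_def by simp
  have mx: "\<forall>v \<in> inners T. strongly_stable_node X v \<or> weakly_stable_node T X v"
    using ms unfolding mixed_stable_def by simp
  show ?case
  proof (cases "w = []")
    case True
    have "AP X w 0 1" unfolding AP_def using True by simp
    then have "Gd X w 0 0" unfolding Gd_def by auto
    moreover have "okm ss ws 0 0" unfolding okm_def by simp
    ultimately show ?thesis by blast
  next
    case False
    define v where "v = butlast w"
    define x where "x = last w"
    have wv: "w = v@[x]" unfolding v_def x_def using False by simp
    have v: "v \<in> inners T" using less.prems wv parent_inner by blast
    have lv: "length v < length w" using wv by simp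
    have IHv: "(\<exists>a b. Gd X v a b \<and> okm ss ws a b) \<or>
           (\<exists>g y a b. v = g@[y] \<and> wk T X g y \<and> Gd X g a b \<and> okm ss ws a b)"
      using less.hyps[of v] lv v by blast
    show ?thesis
    proof (cases "\<exists>g y a b. v = g@[y] \<and> wk T X g y \<and> Gd X g a b \<and> okm ss ws a b")
      case True
      then obtain g y a b where gy: "v = g@[y]" "wk T X g y" "Gd X g a b" "okm ss ws a b" by blast
      have g: "g \<in> inners T" using wk_inner[OF gy(2)] .
      show ?thesis
      proof (cases ss)
        case True
        have "strongly_stable_node X g" using SS True g by blast
        then have False using weak_not_strong[OF q g Gd_inf[OF gy(3)] _ gy(2)] by blast
        then show ?thesis ..
      next
        case False
        have qq: "[y,x] = [y,y] \<or> [y,x] = [y,\<not>y] \<or> [y,x] = [\<not>y]" by (cases "x = y") auto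
        have "Gd X (g@[y,x]) a (Suc b)" using weak_Gd[OF q g gy(2) gy(3) qq] .
        moreover have "w = g@[y,x]" using wv gy(1) by simp
        moreover have "okm ss ws a (Suc b)" using gy(4) False unfolding okm_def by simp
        ultimately show ?thesis by blast
      qed
    next
      case False
      then obtain a b where G: "Gd X v a b" "okm ss ws a b" using IHv by blast
      show ?thesis
      proof (cases "\<not> ss \<and> weakly_stable_node T X v")
        case True
        then obtain d where d: "wk T X v d" unfolding weak_node_iff by blast
        show ?thesis
        proof (cases "x = d")
          case True
          then show ?thesis using wv d G by blast
        next
          case False
          then have qq: "[x] = [d,d] \<or> [x] = [d,\<not>d] \<or> [x] = [\<not>d]" by simp
          have "Gd X (v@[x]) a (Suc b)" using weak_Gd[OF q v d G(1) qq] .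
          moreover have "okm ss ws a (Suc b)" using G(2) True unfolding okm_def by simp
          ultimately show ?thesis using wv by blast
        qed
      next
        case nw: False
        show ?thesis
        proof (cases ws)
          case True
          then have nss: "\<not> ss" using nb by blast
          then have "\<not> weakly_stable_node T X v" using nw by blast
          then obtain g y where gy: "v = g@[y]" "wk T X g y" using WS1 True v by blast
          have g: "g \<in> inners T" using wk_inner[OF gy(2)] .
          have lg: "length g < length w" using gy(1) wv by simp
          have IHg: "(\<exists>a b. Gd X g a b \<and> okm ss ws a b) \<or>
             (\<exists>h z a b. g = h@[z] \<and> wk T X h z \<and> Gd X h a b \<and> okm ss ws a b)"
            using less.hyps[of g] lg g by blast
          show ?thesis
          proof (cases "\<exists>h z a b. g = h@[z] \<and> wk T X h z \<and> Gd X h a b \<and> okm ss ws a b")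
            case True
            then obtain h z where hz: "g = h@[z]" "wk T X h z" by blast
            have "\<not> weakly_stable_node T X g" using WS2 \<open>ws\<close> wk_inner[OF hz(2)] hz by blast
            moreover have "weakly_stable_node T X g" using gy(2) unfolding weak_node_iff by (cases y) auto
            ultimately show ?thesis by blast
          next
            case False
            then obtain a' b' where G': "Gd X g a' b'" "okm ss ws a' b'" using IHg by blast
            have qq: "[y,x] = [y,y] \<or> [y,x] = [y,\<not>y] \<or> [y,x] = [\<not>y]" by (cases "x = y") auto
            have "Gd X (g@[y,x]) a' (Suc b')" using weak_Gd[OF q g gy(2) G'(1) qq] .
            moreover have "w = g@[y,x]" using wv gy(1) by simp
            moreover have "okm ss ws a' (Suc b')" using G'(2) nss unfolding okm_def by simp
            ultimately show ?thesis by blast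
          qed
        next
          case nws: False
          have "strongly_stable_node X v"
          proof (cases ss)
            case True then show ?thesis using SS v by blast
          next
            case False then show ?thesis using nw mx v by blast
          qed
          then have "Gd X (v@[x]) (Suc a) b" using strong_Gd[OF q v _ G(1)] by blast
          moreover have "okm ss ws (Suc a) b" using G(2) nws unfolding okm_def by simp
          ultimately show ?thesis using wv by blast
        qed
      qed
    qed
  qed
qed



lemma leaf_not_inner: "u \<in> leaves T \<Longrightarrow> u \<notin> inners T"
proof (induction T arbitrary: u)
  case Leaf then show ?case by simp
next
  case (Node l r)
  from Node.prems obtain x v where u: "u = x # v" "(x \<and> v \<in> leaves r) \<or> (\<not>x \<and> v \<in> leaves l)" by auto
  show ?case
  proof
    assume "u \<in> inners (Node l r)"
    then have "(x \<and> v \<in> inners r) \<or> (\<not>x \<and> v \<in> inners l)" using u(1) by auto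
    then show False using u(2) Node.IH by blast
  qed
qed

lemma leaf_eq_iff:
  assumes q: "query_seq T X" and u: "u \<in> leaves T"
  shows "X j = u \<longleftrightarrow> prefix u (X j)"
proof
  assume "prefix u (X j)"
  moreover have "X j \<in> leaves T" using q unfolding query_seq_def by simp
  ultimately show "X j = u" using leaf_prefix_eq[OF u] by blast
qed auto

lemma periodic_step:
  fixes X :: "nat \<Rightarrow> 'b" and n i :: nat
  assumes per: "\<forall>k i. i < k * n \<longrightarrow> X i = X (i mod n)" and n: "0 < n"
  shows "X i = X (i mod n)"
proof -
  have "1 * Suc i \<le> n * Suc i" using n by (intro mult_le_mono1) simp
  then have "i < Suc i * n" by (simp add: mult.commute)
  then show ?thesis using per by blast
qed

lemma finish:
  assumes q: "query_seq T X" and G: "\<forall>u\<in>leaves T. \<exists>r. AP X u r (2^a u * 3^b u)"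
  shows "(\<forall>u\<in>leaves T. once_every X u (2^a u * 3^b u)) \<and>
         atomic_length X = 2 ^ Max (a ` leaves T) * 3 ^ Max (b ` leaves T)"
proof -
  define A where "A = Max (a ` leaves T)"
  define B where "B = Max (b ` leaves T)"
  define L where "L = (2::nat)^A * 3^B"
  have fin: "finite (leaves T)" by (rule finite_leaves)
  have ne: "leaves T \<noteq> {}" by (rule leaves_ne)
  have oe: "\<forall>u\<in>leaves T. once_every X u (2^a u * 3^b u)"
  proof
    fix u assume u: "u \<in> leaves T"
    obtain r where ap: "AP X u r (2^a u * 3^b u)" using G u by blast
    define P where "P = (2::nat)^a u * 3^b u"
    have P: "0 < P" "r < P" using ap unfolding AP_def P_def by auto
    have "\<forall>j. X j = u \<longleftrightarrow> j mod P = r" using ap leaf_eq_iff[OF q u] unfolding AP_def P_def by blast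
    then have "\<forall>i. {j. i \<le> j \<and> j < i + P \<and> X j = u} = {j. i \<le> j \<and> j < i + P \<and> j mod P = r}" by blast
    then show "once_every X u (2^a u * 3^b u)" unfolding once_every_def P_def[symmetric]
      using win_card[OF P] by simp
  qed
  have dvdL: "2^a u * 3^b u dvd L" if u: "u \<in> leaves T" for u
  proof -
    have "a u \<le> A" unfolding A_def using fin u by simp
    moreover have "b u \<le> B" unfolding B_def using fin u by simp
    ultimately show ?thesis unfolding L_def by (intro mult_dvd_mono le_imp_power_dvd)
  qed
  have L0: "0 < L" unfolding L_def by simp
  have per: "X (i mod L) = X i" for i
  proof -
    define u where "u = X i"
    have u: "u \<in> leaves T" using q unfolding query_seq_def u_def by simp
    obtain r where ap: "AP X u r (2^a u * 3^b u)" using G u by blast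
    have "prefix u (X i)" by (simp add: u_def)
    then have "i mod (2^a u * 3^b u) = r" using ap unfolding AP_def by blast
    then have "(i mod L) mod (2^a u * 3^b u) = r" using mod_mod_cancel[OF dvdL[OF u]] by simp
    then have "prefix u (X (i mod L))" using ap unfolding AP_def by simp
    then show ?thesis using leaf_eq_iff[OF q u] u_def by simp
  qed
  have minimal: "L \<le> n" if n: "0 < n \<and> (\<forall>k i. i < k * n \<longrightarrow> X i = X (i mod n))" for n
  proof -
    have pd: "2^a u * 3^b u dvd n" if u: "u \<in> leaves T" for u
    proof -
      obtain r where ap: "AP X u r (2^a u * 3^b u)" using G u by blast
      have rP: "r < 2^a u * 3^b u" using ap unfolding AP_def by simp
      have "r mod (2^a u * 3^b u) = r" using rP by simp
      then have Xr: "X r = u" using ap leaf_eq_iff[OF q u] unfolding AP_def by simp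
      have "X (r + n) = X ((r + n) mod n)" using periodic_step n by blast
      also have "(r + n) mod n = r mod n" by simp
      also have "X (r mod n) = X r" using periodic_step[of n X r] n by simp
      finally have "X (r + n) = u" using Xr by simp
      then have "prefix u (X (r + n))" by simp
      then have "(r + n) mod (2^a u * 3^b u) = r" using ap unfolding AP_def by simp
      then show ?thesis using add_mod_dvd rP by blast
    qed
    have "A \<in> a ` leaves T" unfolding A_def using fin ne by simp
    then obtain u1 where u1: "u1 \<in> leaves T" "a u1 = A" by blast
    have "B \<in> b ` leaves T" unfolding B_def using fin ne by simp
    then obtain u2 where u2: "u2 \<in> leaves T" "b u2 = B" by blast
    have "(2::nat)^A dvd n" using pd[OF u1(1)] u1(2) dvd_mult_left by blast
    moreover have "(3::nat)^B dvd n" using pd[OF u2(1)] u2(2) dvd_mult_right by blast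
    moreover have "coprime ((2::nat)^A) (3^B)" by simp
    ultimately have "L dvd n" unfolding L_def by (rule divides_mult)
    then show "L \<le> n" using n by (simp add: dvd_imp_le)
  qed
  have "atomic_length X = L" unfolding atomic_length_def
  proof (rule Least_equality)
    show "0 < L \<and> (\<forall>k i. i < k * L \<longrightarrow> X i = X (i mod L))" using L0 per by simp
    show "\<And>y. 0 < y \<and> (\<forall>k i. i < k * y \<longrightarrow> X i = X (i mod y)) \<Longrightarrow> L \<le> y" using minimal by blast
  qed
  then show ?thesis using oe unfolding L_def A_def B_def by simp
qed



lemma leaf_Gd:
  assumes ms: "mixed_stable T X"
    and SS: "ss \<longrightarrow> (\<forall>v\<in>inners T. strongly_stable_node X v)"
    and WS1: "ws \<longrightarrow> (\<forall>v\<in>inners T. \<not> weakly_stable_node T X v \<longrightarrow> (\<exists>g y. v = g@[y] \<and> wk T X g y))"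
    and WS2: "ws \<longrightarrow> (\<forall>h z. h \<in> inners T \<longrightarrow> wk T X h z \<longrightarrow> \<not> weakly_stable_node T X (h@[z]))"
    and nb: "\<not> (ss \<and> ws)" and u: "u \<in> leaves T"
  shows "\<exists>a b. Gd X u a b \<and> okm ss ws a b"
proof -
  have "u \<in> inners T \<union> leaves T" using u by simp
  note C = main_claim[OF ms SS WS1 WS2 nb this]
  have "\<not> (\<exists>v x a b. u = v@[x] \<and> wk T X v x \<and> Gd X v a b \<and> okm ss ws a b)"
  proof
    assume "\<exists>v x a b. u = v@[x] \<and> wk T X v x \<and> Gd X v a b \<and> okm ss ws a b"
    then obtain v x where "u = v@[x]" "wk T X v x" by blast
    then have "u \<in> inners T" unfolding wk_def by simp
    then show False using leaf_not_inner[OF u] by blast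
  qed
  then show ?thesis using C by blast
qed

lemma no_weak_fav:
  assumes ms: "mixed_stable T X" and h: "h \<in> inners T" and k: "wk T X h z"
  shows "\<not> weakly_stable_node T X (h@[z])"
proof
  assume wn: "weakly_stable_node T X (h@[z])"
  have q: "query_seq T X" using ms unfolding mixed_stable_def by simp
  have "h \<in> inners T \<union> leaves T" using h by simp
  note C = main_claim[of T X False False, OF ms _ _ _ _ this]
  have hz: "h@[z] \<in> inners T" using k unfolding wk_def by simp
  obtain e where e: "wk T X (h@[z]) e" using wn unfolding weak_node_iff by blast
  show False
  proof (cases "\<exists>a b. Gd X h a b \<and> okm False False a b")
    case True
    then obtain a b r where "AP X h r (2^a*3^b)" unfolding Gd_def by blast
    from fav_strong[OF q h k this] have "strongly_stable_node X (h@[z])" "inf_q X (h@[z])" by blast+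
    then show False using weak_not_strong[OF q hz _ _ e] by blast
  next
    case False
    then obtain g y a b where gy: "h = g@[y]" "wk T X g y" "Gd X g a b" using C by blast
    then obtain r where "AP X g r (2^a*3^b)" unfolding Gd_def by blast
    from fav_strong[OF q wk_inner[OF gy(2)] gy(2) this] have "strongly_stable_node X h" "inf_q X h"
      using gy(1) by blast+
    then show False using weak_not_strong[OF q h _ _ k] by blast
  qed
qed

definition fav :: "fbt \<Rightarrow> (nat \<Rightarrow> bool list) \<Rightarrow> bool list \<Rightarrow> bool list" where
  "fav T X g = g @ [if wk T X g False then False else True]"

lemma counting:
  assumes ms: "mixed_stable T X" and ws: "weakly_stable T X"
  shows "\<forall>v\<in>inners T. \<not> weakly_stable_node T X v \<longrightarrow> (\<exists>g y. v = g@[y] \<and> wk T X g y)"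
proof -
  define I where "I = inners T"
  define W where "W = {v \<in> inners T. weakly_stable_node T X v}"
  have finI: "finite I" unfolding I_def by (rule finite_inners)
  have WI: "W \<subseteq> I" unfolding W_def I_def by blast
  have cnt: "2 * card W = card I" using ws unfolding weakly_stable_def W_def I_def by simp
  have favwk: "wk T X g (if wk T X g False then False else True)" if "g \<in> W" for g
    using that unfolding W_def weak_node_iff by auto
  have img: "fav T X ` W \<subseteq> I - W"
  proof
    fix x assume "x \<in> fav T X ` W"
    then obtain g where g: "g \<in> W" "x = fav T X g" by blast
    have k: "wk T X g (if wk T X g False then False else True)" using favwk[OF g(1)] .
    have gi: "g \<in> inners T" using g(1) unfolding W_def by simp
    have "x \<in> inners T" using k g(2) unfolding fav_def wk_def by simp
    moreover have "\<not> weakly_stable_node T X x" using no_weak_fav[OF ms gi k] g(2) unfolding fav_def by simp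
    ultimately show "x \<in> I - W" unfolding I_def W_def by simp
  qed
  have inj: "inj_on (fav T X) W"
  proof (rule inj_onI)
    fix x y assume "fav T X x = fav T X y"
    then have "butlast (fav T X x) = butlast (fav T X y)" by simp
    then show "x = y" unfolding fav_def by simp
  qed
  have "card (fav T X ` W) = card W" using card_image[OF inj] .
  also have "card W = card (I - W)" using card_Diff_subset[OF finite_subset[OF WI finI] WI] cnt by simp
  finally have "fav T X ` W = I - W" using card_subset_eq[OF finite_Diff[OF finI] img] by simp
  then show ?thesis
  proof (intro ballI impI)
    fix v assume eq: "fav T X ` W = I - W" and v: "v \<in> inners T" and nw: "\<not> weakly_stable_node T X v"
    have "v \<in> I - W" using v nw unfolding I_def W_def by simp
    then obtain g where g: "g \<in> W" "v = fav T X g" using eq by blast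
    then show "\<exists>g y. v = g@[y] \<and> wk T X g y" using favwk[OF g(1)] unfolding fav_def by blast
  qed
qed

theorem lemma1:
  fixes T :: fbt and X :: "nat \<Rightarrow> bool list"
  assumes "mixed_stable T X"
  shows "\<exists>a b :: bool list \<Rightarrow> nat.
           (\<forall>u \<in> leaves T. once_every X u (2 ^ a u * 3 ^ b u)) \<and>
           atomic_length X = 2 ^ Max (a ` leaves T) * 3 ^ Max (b ` leaves T) \<and>
           (strongly_stable T X \<longrightarrow> (\<forall>u \<in> leaves T. b u = 0)) \<and>
           (weakly_stable T X \<longrightarrow> (\<forall>u \<in> leaves T. a u = 0))"
proof -
  note ms = assms
  have q: "query_seq T X" using ms unfolding mixed_stable_def by simp
  have NW: "\<forall>h z. h \<in> inners T \<longrightarrow> wk T X h z \<longrightarrow> \<not> weakly_stable_node T X (h@[z])"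
    using no_weak_fav[OF ms] by blast
  show ?thesis
  proof (cases "strongly_stable T X \<and> weakly_stable T X")
    case both: True
    have SSa: "\<forall>v\<in>inners T. strongly_stable_node X v" using both unfolding strongly_stable_def by simp
    show ?thesis
    proof (cases "inners T = {}")
      case True
      then have lv: "leaves T = {[]}" by (rule inners_Leaf)
      have "AP X [] 0 1" unfolding AP_def by simp
      then have "\<forall>u\<in>leaves T. \<exists>r. AP X u r (2^(\<lambda>_. 0::nat) u * 3^(\<lambda>_. 0::nat) u)" using lv by (simp; blast)
      from finish[OF q this] have H:
        "(\<forall>u\<in>leaves T. once_every X u (2 ^ (\<lambda>_. 0::nat) u * 3 ^ (\<lambda>_. 0::nat) u)) \<and>
         atomic_length X = 2 ^ Max ((\<lambda>_. 0::nat) ` leaves T) * 3 ^ Max ((\<lambda>_. 0::nat) ` leaves T)" .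
      have H2: "(\<forall>u\<in>leaves T. once_every X u (2 ^ (\<lambda>_::bool list. 0::nat) u * 3 ^ (\<lambda>_::bool list. 0::nat) u)) \<and>
         atomic_length X = 2 ^ Max ((\<lambda>_::bool list. 0::nat) ` leaves T) * 3 ^ Max ((\<lambda>_::bool list. 0::nat) ` leaves T) \<and>
         (strongly_stable T X \<longrightarrow> (\<forall>u\<in>leaves T. (\<lambda>_::bool list. 0::nat) u = 0)) \<and>
         (weakly_stable T X \<longrightarrow> (\<forall>u\<in>leaves T. (\<lambda>_::bool list. 0::nat) u = 0))"
        using H by blast
      show ?thesis
        apply (rule exI[where x = "\<lambda>_::bool list. 0::nat"])
        apply (rule exI[where x = "\<lambda>_::bool list. 0::nat"])
        using H2 by blast
    next
      case False
      have "card (inners T) \<noteq> 0" using False finite_inners[of T] by simp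
      moreover have "2 * card {v \<in> inners T. weakly_stable_node T X v} = card (inners T)"
        using both unfolding weakly_stable_def by blast
      ultimately have "card {v \<in> inners T. weakly_stable_node T X v} \<noteq> 0" by linarith
      then have "{v \<in> inners T. weakly_stable_node T X v} \<noteq> {}" by (intro notI) simp
      then obtain v where v: "v \<in> inners T" "weakly_stable_node T X v" by blast
      obtain e where e: "wk T X v e" using v(2) unfolding weak_node_iff by blast
      have "v \<in> inners T \<union> leaves T" using v by simp
      note C = main_claim[of T X True False, OF ms _ _ _ _ this]
      have C': "(\<exists>a b. Gd X v a b) \<or> (\<exists>g y a b. v = g@[y] \<and> wk T X g y \<and> Gd X g a b)"
        using C SSa by blast
      have False
      proof (cases "\<exists>a b. Gd X v a b")
        case True
        then obtain a b where "Gd X v a b" by blast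
        then show False using weak_not_strong[OF q v(1) Gd_inf _ e] SSa v(1) by blast
      next
        case False
        then obtain g y a b where gy: "v = g@[y]" "wk T X g y" "Gd X g a b" using C' by blast
        have g: "g \<in> inners T" using wk_inner[OF gy(2)] .
        show False using weak_not_strong[OF q g Gd_inf[OF gy(3)] _ gy(2)] SSa g by blast
      qed
      then show ?thesis ..
    qed
  next
    case nb: False
    define ss where "ss = strongly_stable T X"
    define ws where "ws = weakly_stable T X"
    have SS: "ss \<longrightarrow> (\<forall>v\<in>inners T. strongly_stable_node X v)" unfolding ss_def strongly_stable_def by simp
    have WS1: "ws \<longrightarrow> (\<forall>v\<in>inners T. \<not> weakly_stable_node T X v \<longrightarrow> (\<exists>g y. v = g@[y] \<and> wk T X g y))"
      unfolding ws_def using counting[OF ms] by blast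
    have WS2: "ws \<longrightarrow> (\<forall>h z. h \<in> inners T \<longrightarrow> wk T X h z \<longrightarrow> \<not> weakly_stable_node T X (h@[z]))"
      using NW by blast
    have nb': "\<not> (ss \<and> ws)" using nb unfolding ss_def ws_def .
    have "\<forall>u\<in>leaves T. \<exists>ab. Gd X u (fst ab) (snd ab) \<and> okm ss ws (fst ab) (snd ab)"
    proof
      fix u assume "u \<in> leaves T"
      then obtain a b where "Gd X u a b \<and> okm ss ws a b" using leaf_Gd[OF ms SS WS1 WS2 nb'] by blast
      then show "\<exists>ab. Gd X u (fst ab) (snd ab) \<and> okm ss ws (fst ab) (snd ab)" by (intro exI[of _ "(a,b)"]) simp
    qed
    from bchoice[OF this] obtain f where f: "\<forall>u\<in>leaves T. Gd X u (fst (f u)) (snd (f u)) \<and> okm ss ws (fst (f u)) (snd (f u))"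
      by blast
    define a where "a = (\<lambda>u. fst (f u))"
    define b where "b = (\<lambda>u. snd (f u))"
    have "\<forall>u\<in>leaves T. \<exists>r. AP X u r (2^a u * 3^b u)" using f unfolding Gd_def a_def b_def by blast
    note Fi = finish[OF q this]
    have "strongly_stable T X \<longrightarrow> (\<forall>u \<in> leaves T. b u = 0)"
      using f unfolding b_def okm_def ss_def by blast
    moreover have "weakly_stable T X \<longrightarrow> (\<forall>u \<in> leaves T. a u = 0)"
      using f unfolding a_def okm_def ws_def by blast
    ultimately show ?thesis using Fi by blast
  qed
qed


end
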